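(* Let $\Gamma$ be a lattice satisfying the standing assumptions below, and let $\mathcal{F}_1,\dots,\mathcal{F}_K$ be the face-equivalence classes of $\mathcal{F}$. Let $f\in\mathcal{F}_i$ and $f'\in\mathcal{F}_j$ with $i\neq j$. Then for every face path $\rho=(f_1=f,\dots,f_m=f')$ from $f$ to $f'$, the operator $W^Z_{f,f'}(\rho)=\prod_{k=1}^m Z_{f_k}$ is a ($Z$-type) logical operator of the 3D toric code on $\Gamma$.
   Context: $\Gamma$ is a finite, connected three-dimensional cell complex with edges $C_1(\Gamma)$ (partial edges allowed at the boundary), faces $C_2(\Gamma)$, volumes $C_3(\Gamma)$; $\partial(f)$ denotes boundary edges of a face, $\partial(\nu)$ boundary faces of a volume, $\iota(e)$ the faces containing edge $e$, and $\iota(f)$ the volumes having $f$ in their boundary. Every face lies in the boundary of at most two volumes. Standing assumptions: (L1) $\Gamma$ has no boundaries in its interior; (L2) the boundary of every face of $\Gamma$ and of its dual $\Gamma^*$ is a closed path or an open path beginning and ending with partial edges; the dual complex is connected. The 3D toric code on $\Gamma$ has one qubit per face and stabilizer group generated by $B_e=\prod_{f\in\iota(e)}Z_f$ and $A_\nu=\prod_{f\in\partial(\nu)}X_f$; a logical operator is a Pauli operator commuting with all stabilizers but not in the stabilizer group (up to phase). A face path from $f_1$ to $f_m$ is a sequence of faces $(f_1,\dots,f_m)$ with pairwise distinct volumes $\nu_1,\dots,\nu_{m-1}$ such that $f_i,f_{i+1}\in\partial(\nu_i)$. Let $\mathcal{F}=\{f\in C_2(\Gamma):|\iota(f)|=1\}$.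 Two faces $f,f'\in\mathcal{F}$ are face-equivalent if there is a face path $\rho$ from $f$ to $f'$ such that $\prod_{g\in\rho}Z_g$ is a stabilizer; every face is considered equivalent to itself. As in the paper, face equivalence is taken to be an equivalence relation on $\mathcal{F}$, with classes $\mathcal{F}_1,\dots,\mathcal{F}_K$. *)

theory Defs
  imports Main
begin

(* A 3D cell complex is given by finite sets of edges E, faces F, volumes V
   (of possibly different types) together with boundary maps
   bdF f = \<partial>(f) (edges of a face) and bdV v = \<partial>(v) (faces of a volume). *)

definition iota_e :: "'f set \<Rightarrow> ('f \<Rightarrow> 'e set) \<Rightarrow> 'e \<Rightarrow> 'f set" where
  "iota_e F bdF e = {f \<in> F. e \<in> bdF f}"

definition iota_f :: "'v set \<Rightarrow> ('v \<Rightarrow> 'f set) \<Rightarrow> 'f \<Rightarrow> 'v set" where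
  "iota_f V bdV f = {v \<in> V. f \<in> bdV v}"

definition cell_adj :: "('f \<Rightarrow> 'e set) \<Rightarrow> ('v \<Rightarrow> 'f set) \<Rightarrow>
     ('e + 'f + 'v) \<Rightarrow> ('e + 'f + 'v) \<Rightarrow> bool" where
  "cell_adj bdF bdV a b =
     ((\<exists>e f. {a, b} = {Inl e, Inr (Inl f)} \<and> e \<in> bdF f) \<or>
      (\<exists>f v. {a, b} = {Inr (Inl f), Inr (Inr v)} \<and> f \<in> bdV v))"

definition cells :: "'e set \<Rightarrow> 'f set \<Rightarrow> 'v set \<Rightarrow> ('e + 'f + 'v) set" where
  "cells E F V = Inl ` E \<union> Inr ` (Inl ` F \<union> Inr ` V)"

definition dual_adj :: "('v \<Rightarrow> 'f set) \<Rightarrow> 'v \<Rightarrow> 'v \<Rightarrow> bool" where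
  "dual_adj bdV v w = (bdV v \<inter> bdV w \<noteq> {})"

definition connected_on :: "'a set \<Rightarrow> ('a \<Rightarrow> 'a \<Rightarrow> bool) \<Rightarrow> bool" where
  "connected_on S R = (\<forall>a\<in>S. \<forall>b\<in>S. (\<lambda>x y. x \<in> S \<and> y \<in> S \<and> R x y)\<^sup>*\<^sup>* a b)"

(* Formalizable part of the standing assumptions on \<Gamma>. *)
definition cell_complex3 :: "'e set \<Rightarrow> 'f set \<Rightarrow> 'v set \<Rightarrow> ('f \<Rightarrow> 'e set) \<Rightarrow> ('v \<Rightarrow> 'f set) \<Rightarrow> bool" where
  "cell_complex3 E F V bdF bdV =
     (finite E \<and> finite F \<and> finite V \<and>
      (\<forall>f\<in>F. bdF f \<subseteq> E) \<and> (\<forall>v\<in>V. bdV v \<subseteq> F) \<and>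
      (\<forall>f\<in>F. card (iota_f V bdV f) \<le> 2) \<and>
      connected_on (cells E F V) (cell_adj bdF bdV) \<and>
      connected_on V (dual_adj bdV))"

(* Pauli operators on the qubits (faces), modulo phase, in binary symplectic
   representation: (X-part, Z-part). *)
type_synonym 'f pauli = "('f \<Rightarrow> bool) \<times> ('f \<Rightarrow> bool)"

definition pauli_id :: "'f pauli" where
  "pauli_id = (\<lambda>_. False, \<lambda>_. False)"

definition pmult :: "'f pauli \<Rightarrow> 'f pauli \<Rightarrow> 'f pauli" where
  "pmult P Q = (\<lambda>q. fst P q \<noteq> fst Q q, \<lambda>q. snd P q \<noteq> snd Q q)"

definition Zop :: "'f set \<Rightarrow> 'f pauli" where
  "Zop S = (\<lambda>_. False, \<lambda>q. q \<in> S)"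

definition Xop :: "'f set \<Rightarrow> 'f pauli" where
  "Xop S = (\<lambda>q. q \<in> S, \<lambda>_. False)"

definition Zprod :: "'f list \<Rightarrow> 'f pauli" where
  "Zprod fs = (\<lambda>_. False, \<lambda>q. odd (count_list fs q))"

(* two Paulis on the qubit set F commute iff the symplectic form vanishes *)
definition pcommute :: "'f set \<Rightarrow> 'f pauli \<Rightarrow> 'f pauli \<Rightarrow> bool" where
  "pcommute F P Q =
     even (card {q \<in> F. (fst P q \<and> snd Q q) \<noteq> (snd P q \<and> fst Q q)})"

inductive_set generated :: "'f pauli set \<Rightarrow> 'f pauli set" for G where
  gen_id: "pauli_id \<in> generated G"
| gen_mult: "g \<in> G \<Longrightarrow> P \<in> generated G \<Longrightarrow> pmult g P \<in> generated G"

definition toric_gens :: "'e set \<Rightarrow> 'f set \<Rightarrow> 'v set \<Rightarrow> ('f \<Rightarrow> 'e set) \<Rightarrow> ('v \<Rightarrow> 'f set) \<Rightarrow> 'f pauli set" where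
  "toric_gens E F V bdF bdV =
     {Zop (iota_e F bdF e) | e. e \<in> E} \<union> {Xop (bdV v) | v. v \<in> V}"

definition stabilizers :: "'e set \<Rightarrow> 'f set \<Rightarrow> 'v set \<Rightarrow> ('f \<Rightarrow> 'e set) \<Rightarrow> ('v \<Rightarrow> 'f set) \<Rightarrow> 'f pauli set" where
  "stabilizers E F V bdF bdV = generated (toric_gens E F V bdF bdV)"

definition is_pauli_on :: "'f set \<Rightarrow> 'f pauli \<Rightarrow> bool" where
  "is_pauli_on F P = (\<forall>q. q \<notin> F \<longrightarrow> \<not> fst P q \<and> \<not> snd P q)"

definition logical_op :: "'e set \<Rightarrow> 'f set \<Rightarrow> 'v set \<Rightarrow> ('f \<Rightarrow> 'e set) \<Rightarrow> ('v \<Rightarrow> 'f set) \<Rightarrow> 'f pauli \<Rightarrow> bool" where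
  "logical_op E F V bdF bdV P =
     (is_pauli_on F P \<and>
      (\<forall>S \<in> stabilizers E F V bdF bdV. pcommute F P S) \<and>
      P \<notin> stabilizers E F V bdF bdV)"

definition is_Z_type :: "'f pauli \<Rightarrow> bool" where
  "is_Z_type P = (\<forall>q. \<not> fst P q)"

definition face_path :: "'f set \<Rightarrow> 'v set \<Rightarrow> ('v \<Rightarrow> 'f set) \<Rightarrow> 'f list \<Rightarrow> 'f \<Rightarrow> 'f \<Rightarrow> bool" where
  "face_path F V bdV fs f f' =
     (fs \<noteq> [] \<and> set fs \<subseteq> F \<and> hd fs = f \<and> last fs = f' \<and>
      (\<exists>vs. length vs = length fs - 1 \<and> distinct vs \<and> set vs \<subseteq> V \<and>
         (\<forall>i < length vs. fs ! i \<in> bdV (vs ! i) \<and> fs ! (i + 1) \<in> bdV (vs ! i))))"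

definition bfaces :: "'f set \<Rightarrow> 'v set \<Rightarrow> ('v \<Rightarrow> 'f set) \<Rightarrow> 'f set" where
  "bfaces F V bdV = {f \<in> F. card (iota_f V bdV f) = 1}"

definition face_equiv :: "'e set \<Rightarrow> 'f set \<Rightarrow> 'v set \<Rightarrow> ('f \<Rightarrow> 'e set) \<Rightarrow> ('v \<Rightarrow> 'f set) \<Rightarrow> 'f \<Rightarrow> 'f \<Rightarrow> bool" where
  "face_equiv E F V bdF bdV f f' =
     (f \<in> bfaces F V bdV \<and> f' \<in> bfaces F V bdV \<and>
      (f = f' \<or> (\<exists>fs. face_path F V bdV fs f f' \<and>
                       Zprod fs \<in> stabilizers E F V bdF bdV)))"

definition face_equiv_rel :: "'e set \<Rightarrow> 'f set \<Rightarrow> 'v set \<Rightarrow> ('f \<Rightarrow> 'e set) \<Rightarrow> ('v \<Rightarrow> 'f set) \<Rightarrow> 'f rel" where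
  "face_equiv_rel E F V bdF bdV = {(f, f'). face_equiv E F V bdF bdV f f'}"

end

theory Submission imports Defs begin

lemma sum_count_filter:
  "finite S \<Longrightarrow> sum (count_list fs) S = length (filter (\<lambda>x. x \<in> S) fs)"
proof (induction fs)
  case (Cons a fs)
  have "sum (count_list (a # fs)) S = sum (\<lambda>x. count_list fs x + (if x = a then 1 else 0)) S"
    by (rule sum.cong) auto
  also have "\<dots> = sum (count_list fs) S + (if a \<in> S then 1 else 0)"
    using Cons.prems by (simp add: sum.distrib sum.delta')
  finally show ?case using Cons by simp
qed simp

lemma card_xor_parity:
  assumes "finite F"
  shows "even (card {q\<in>F. z q \<and> (a q \<noteq> b q)}) \<longleftrightarrow>
         (even (card {q\<in>F. z q \<and> a q}) \<longleftrightarrow> even (card {q\<in>F. z q \<and> b q}))"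
proof -
  let ?A = "{q\<in>F. z q \<and> a q}" and ?B = "{q\<in>F. z q \<and> b q}"
  have fA: "finite ?A" "finite ?B" using assms by auto
  have eq: "{q\<in>F. z q \<and> (a q \<noteq> b q)} = (?A - ?B) \<union> (?B - ?A)" by auto
  have c: "card ((?A - ?B) \<union> (?B - ?A)) = card (?A - ?B) + card (?B - ?A)"
    by (rule card_Un_disjoint) (use fA in auto)
  have c1: "card (?A - ?B) = card ?A - card (?A \<inter> ?B)" "card (?A \<inter> ?B) \<le> card ?A"
    using fA by (auto simp: card_Diff_subset_Int intro: card_mono)
  have c2: "card (?B - ?A) = card ?B - card (?A \<inter> ?B)" "card (?A \<inter> ?B) \<le> card ?B"
    using fA by (auto simp: card_Diff_subset_Int Int_commute intro: card_mono)
  show ?thesis unfolding eq c using c1 c2 by presburger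
qed


lemma path_vol_even:
  assumes cc: "cell_complex3 E F V bdF bdV"
    and fp: "face_path F V bdV fs f f'"
    and bf: "f \<in> bfaces F V bdV" and bf': "f' \<in> bfaces F V bdV"
    and len: "length fs \<ge> 2" and vV: "v \<in> V"
  shows "even (length (filter (\<lambda>x. x \<in> bdV v) fs))"
proof -
  have finV: "finite V" and c2: "\<forall>g\<in>F. card (iota_f V bdV g) \<le> 2"
    using cc by (auto simp: cell_complex3_def)
  obtain vs where lvs: "length vs = length fs - 1" and dvs: "distinct vs" and svs: "set vs \<subseteq> V"
    and adj: "\<forall>i < length vs. fs ! i \<in> bdV (vs ! i) \<and> fs ! (i + 1) \<in> bdV (vs ! i)"
    and ne: "fs \<noteq> []" and sF: "set fs \<subseteq> F" and hd: "hd fs = f" and lst: "last fs = f'"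
    using fp unfolding face_path_def by blast
  define n where "n = length vs"
  have lfs: "length fs = Suc n" and n1: "n \<ge> 1" using lvs len n_def by auto
  have vsV: "\<And>j. j < n \<Longrightarrow> vs ! j \<in> V" using svs n_def by auto
  have f0: "fs ! 0 = f" using hd ne by (simp add: hd_conv_nth)
  have fn: "fs ! n = f'" using lst ne lfs by (simp add: last_conv_nth)
  have claim: "fs ! k \<in> bdV v \<longleftrightarrow> (\<exists>j<n. vs ! j = v \<and> (k = j \<or> k = Suc j))"
    if kl: "k < Suc n" for k
  proof
    assume "\<exists>j<n. vs ! j = v \<and> (k = j \<or> k = Suc j)"
    then show "fs ! k \<in> bdV v" using adj n_def by auto
  next
    assume kv: "fs ! k \<in> bdV v"
    have vi: "v \<in> iota_f V bdV (fs ! k)" using kv vV by (simp add: iota_f_def)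
    have fin: "finite (iota_f V bdV (fs ! k))" using finV by (simp add: iota_f_def)
    show "\<exists>j<n. vs ! j = v \<and> (k = j \<or> k = Suc j)"
    proof (cases "k = 0")
      case True
      have "0 < length vs" using n1 n_def by linarith
      then have "vs ! 0 \<in> V" "fs ! 0 \<in> bdV (vs ! 0)" using adj svs by auto
      then have "vs ! 0 \<in> iota_f V bdV (fs ! k)" using True by (auto simp: iota_f_def)
      moreover have "card (iota_f V bdV (fs ! k)) = 1" using bf f0 True by (simp add: bfaces_def)
      ultimately have "vs ! 0 = v" using vi by (metis card_1_singletonE singletonD)
      then show ?thesis using True n1 by auto
    next
      case False
      show ?thesis
      proof (cases "k = n")
        case True
        have nn: "n - 1 < length vs" "Suc (n - 1) = n" using n1 n_def by linarith+
        have "vs ! (n - 1) \<in> V" "fs ! Suc (n - 1) \<in> bdV (vs ! (n - 1))" using adj nn(1) svs by auto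
        then have "vs ! (n - 1) \<in> iota_f V bdV (fs ! k)" using True nn(2) by (auto simp: iota_f_def)
        moreover have "card (iota_f V bdV (fs ! k)) = 1" using bf' fn True by (simp add: bfaces_def)
        ultimately have "vs ! (n - 1) = v" using vi by (metis card_1_singletonE singletonD)
        then show ?thesis using True n1 by (intro exI[of _ "n - 1"]) auto
      next
        case False2: False
        have kn: "k < n" "k - 1 < n" using kl False False2 by auto
        have a1: "vs ! (k - 1) \<in> iota_f V bdV (fs ! k)"
          using adj[rule_format, of "k - 1"] kn n_def vsV False by (auto simp: iota_f_def)
        have a2: "vs ! k \<in> iota_f V bdV (fs ! k)"
          using adj[rule_format, of "k"] kn n_def vsV by (auto simp: iota_f_def)
        have dd: "vs ! (k - 1) \<noteq> vs ! k"
          using dvs kn n_def False by (simp add: nth_eq_iff_index_eq)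
        have c: "card (iota_f V bdV (fs ! k)) \<le> 2" proof -
          have "fs ! k \<in> set fs" using kl lfs by (metis nth_mem)
          then show ?thesis using c2 sF by blast
        qed
        show ?thesis
        proof (rule ccontr)
          assume "\<not> ?thesis"
          then have H: "\<forall>j<n. vs ! j = v \<longrightarrow> k \<noteq> j \<and> k \<noteq> Suc j" by blast
          have "Suc (k - 1) = k" using False by simp
          then have "v \<noteq> vs ! (k - 1)" using H[rule_format, of "k - 1"] kn by auto
          have "v \<noteq> vs ! k" using H[rule_format, of k] kn by auto
          note \<open>v \<noteq> vs ! (k - 1)\<close> this
          then have "card {v, vs ! (k - 1), vs ! k} = 3" using dd by simp
          moreover have "card {v, vs ! (k - 1), vs ! k} \<le> card (iota_f V bdV (fs ! k))"
            using vi a1 a2 fin by (intro card_mono) auto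
          ultimately show False using c by simp
        qed
      qed
    qed
  qed
  have "length (filter (\<lambda>x. x \<in> bdV v) fs) = card {k. k < Suc n \<and> fs ! k \<in> bdV v}"
    by (simp add: length_filter_conv_card lfs)
  also have "{k. k < Suc n \<and> fs ! k \<in> bdV v} = {k. k < Suc n \<and> (\<exists>j<n. vs ! j = v \<and> (k = j \<or> k = Suc j))}"
    using claim by blast
  finally have eqc: "length (filter (\<lambda>x. x \<in> bdV v) fs) = card {k. k < Suc n \<and> (\<exists>j<n. vs ! j = v \<and> (k = j \<or> k = Suc j))}" .
  show ?thesis
  proof (cases "\<exists>j<n. vs ! j = v")
    case True
    then obtain j0 where j0: "j0 < n" "vs ! j0 = v" by blast
    have uq: "\<And>j. j < n \<Longrightarrow> vs ! j = v \<longleftrightarrow> j = j0"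
      using j0 dvs n_def by (auto simp: nth_eq_iff_index_eq)
    have "{k. k < Suc n \<and> (\<exists>j<n. vs ! j = v \<and> (k = j \<or> k = Suc j))} = {j0, Suc j0}"
      using uq j0 by auto
    then show ?thesis using eqc by simp
  next
    case False
    then have "{k. k < Suc n \<and> (\<exists>j<n. vs ! j = v \<and> (k = j \<or> k = Suc j))} = {}" by auto
    then show ?thesis unfolding eqc by (simp only: card.empty) simp
  qed
qed


lemma pc_Z: "pcommute F (Zprod fs) Q \<longleftrightarrow> even (card {q\<in>F. odd (count_list fs q) \<and> fst Q q})"
  unfolding pcommute_def Zprod_def by simp

theorem lemma3:
  fixes E :: "'e set" and F :: "'f set" and V :: "'v set"
    and bdF :: "'f \<Rightarrow> 'e set" and bdV :: "'v \<Rightarrow> 'f set"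
  assumes "cell_complex3 E F V bdF bdV"
    and "equiv (bfaces F V bdV) (face_equiv_rel E F V bdF bdV)"
    and "Ci \<in> bfaces F V bdV // face_equiv_rel E F V bdF bdV"
    and "Cj \<in> bfaces F V bdV // face_equiv_rel E F V bdF bdV"
    and "Ci \<noteq> Cj" and "f \<in> Ci" and "f' \<in> Cj"
    and "face_path F V bdV fs f f'"
  shows "is_Z_type (Zprod fs) \<and> logical_op E F V bdF bdV (Zprod fs)"
proof -
  note cc = assms(1) and eqv = assms(2) and fp = assms(8)
  have finF: "finite F" and bdVF: "\<forall>v\<in>V. bdV v \<subseteq> F" using cc by (auto simp: cell_complex3_def)
  have sub: "\<And>X. X \<in> bfaces F V bdV // face_equiv_rel E F V bdF bdV \<Longrightarrow> X \<subseteq> bfaces F V bdV"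
    using eqv by (metis Union_quotient Union_upper)
  have bf: "f \<in> bfaces F V bdV" "f' \<in> bfaces F V bdV" using sub assms(3,4,6,7) by auto
  have notrel: "(f, f') \<notin> face_equiv_rel E F V bdF bdV"
    using quotient_eqI[OF eqv assms(3,4,6,7)] assms(5) by blast
  have ne: "fs \<noteq> []" and sF: "set fs \<subseteq> F" and hd: "hd fs = f" and lst: "last fs = f'"
    using fp unfolding face_path_def by blast+
  have len: "length fs \<ge> 2"
  proof (rule ccontr)
    assume "\<not> ?thesis"
    with ne obtain x where "fs = [x]"
      by (cases fs; cases "tl fs") (auto simp: numeral_2_eq_2)
    then have "f = f'" using hd lst by simp
    then have "(f, f') \<in> face_equiv_rel E F V bdF bdV"
      using bf by (simp add: face_equiv_rel_def face_equiv_def)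
    then show False using notrel by simp
  qed
  have notstab: "Zprod fs \<notin> stabilizers E F V bdF bdV"
  proof
    assume "Zprod fs \<in> stabilizers E F V bdF bdV"
    then have "(f, f') \<in> face_equiv_rel E F V bdF bdV"
      using bf fp by (auto simp: face_equiv_rel_def face_equiv_def)
    then show False using notrel by simp
  qed
  have pauli: "is_pauli_on F (Zprod fs)"
    unfolding is_pauli_on_def Zprod_def
  proof (intro allI impI)
    fix q assume "q \<notin> F"
    then have "count_list fs q = 0" using sF by (simp add: count_list_0_iff subset_iff) blast
    then show "\<not> fst (\<lambda>_. False, \<lambda>q. odd (count_list fs q)) q \<and> \<not> snd (\<lambda>_. False, \<lambda>q. odd (count_list fs q)) q"
      by simp
  qed
  have gens: "pcommute F (Zprod fs) g" if "g \<in> toric_gens E F V bdF bdV" for g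
  proof -
    from that consider e where "g = Zop (iota_e F bdF e)" | v where "v \<in> V" "g = Xop (bdV v)"
      unfolding toric_gens_def by blast
    then show ?thesis
    proof cases
      case 1 then show ?thesis by (simp add: pc_Z Zop_def)
    next
      case (2 v)
      have bsub: "bdV v \<subseteq> F" using bdVF 2 by auto
      have fb: "finite (bdV v)" using bsub finF finite_subset by blast
      have "{q\<in>F. odd (count_list fs q) \<and> fst g q} = {q\<in>bdV v. odd (count_list fs q)}"
        using bsub 2 by (auto simp: Xop_def)
      moreover have "even (sum (count_list fs) (bdV v))"
        using sum_count_filter[OF fb, of fs] path_vol_even[OF cc fp bf len 2(1)] by simp
      ultimately show ?thesis using even_sum_iff[OF fb, of "count_list fs"] by (simp add: pc_Z)
    qed
  qed
  have comm: "pcommute F (Zprod fs) S" if "S \<in> stabilizers E F V bdF bdV" for S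
    using that unfolding stabilizers_def
  proof (induction rule: generated.induct)
    case gen_id
    then show ?case by (simp add: pc_Z pauli_id_def)
  next
    case (gen_mult g P)
    have "pcommute F (Zprod fs) g" using gens gen_mult(1) .
    then show ?case using gen_mult(3)
      using card_xor_parity[OF finF, of "\<lambda>q. odd (count_list fs q)" "fst g" "fst P"]
      by (simp add: pc_Z pmult_def)
  qed
  show ?thesis
    using pauli comm notstab by (simp add: is_Z_type_def Zprod_def logical_op_def)
qed

end
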